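(* Let $R\subseteq S$, $\sigma$ be as in the context. Let $\mathbf{a}=(a_1,\ldots,a_\ell)\in(S^* )^\ell$ and $\beta_{i,j}\in S$ for $1\le i\le\ell$, $1\le j\le n_i$, satisfying: (i) $a_i-a_j^\beta\in S^*$ for all $\beta\in S^*$ and $1\le i<j\le\ell$; (ii) for each $i$, $\beta_{i,1},\ldots,\beta_{i,n_i}$ are $R$-linearly independent. Then there exist units $\gamma_{i,j}\in S^*$ ($1\le i\le\ell$, $1\le j\le n_i$) with $\gamma_{1,1}=\beta_{1,1}$, such that the skew polynomials $$G_{i,j}=\big(x-a_i^{\gamma_{i,j}}\big)\cdots\big(x-a_i^{\gamma_{i,1}}\big)\big(x-a_{i-1}^{\gamma_{i-1,n_{i-1}}}\big)\cdots\big(x-a_{i-1}^{\gamma_{i-1,1}}\big)\cdots\big(x-a_1^{\gamma_{1,n_1}}\big)\cdots\big(x-a_1^{\gamma_{1,1}}\big)\in S[x;\sigma]$$ have degree $\deg(G_{i,j})=\sum_{u=1}^{i-1}n_u+j$ and satisfy, for all $1\le u\le\ell$, $1\le v\le n_u$: $G_{i,j}(a_u^{\beta_{u,v}})=0$ if $u\le i-1$, or if $u=i$ and $v\le j$; and $G_{i,j}(a_u^{\beta_{u,v}})\in S^*$ if $u\ge i+1$, or if $u=i$ and $v\ge j+1$. This holds for all $1\le i\le\ell$ and $1\le j\le n_i$.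
   Context: $R$ is a finite commutative chain ring with maximal ideal $\mathfrak{m}$, $q=|R/\mathfrak{m}|$; $S=R[x]/(h)$ with $h$ monic of degree $m$ irreducible modulo $\mathfrak{m}$, local with maximal ideal $\mathfrak{M}=\mathfrak{m}S$ and unit group $S^*=S\setminus\mathfrak{M}$. $\sigma$ is a ring automorphism of $S$ generating the Galois group of $R\subseteq S$, with fixed ring $R$, reducing modulo $\mathfrak{M}$ to $y\mapsto y^q$ on $\mathbb{F}_{q^m}$. $S[x;\sigma]$ is the skew polynomial ring with $xa=\sigma(a)x$. For $a\in S$ and $\beta\in S^*$, $a^\beta=\sigma(\beta)a\beta^{-1}$. For $F\in S[x;\sigma]$ and $b\in S$, the remainder evaluation $F(b)$ is the unique $c\in S$ such that $F=Q\cdot(x-b)+c$ for some $Q\in S[x;\sigma]$. *)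

theory Defs
  imports "HOL-Computational_Algebra.Polynomial"
begin

text \<open>The ring S is the ambient type 'a (a commutative ring); R is a subset of it.\<close>

definition subring_of :: "'a::comm_ring_1 set \<Rightarrow> bool" where
  "subring_of R \<longleftrightarrow> 0 \<in> R \<and> 1 \<in> R \<and>
     (\<forall>x\<in>R. \<forall>y\<in>R. x + y \<in> R \<and> x * y \<in> R \<and> - x \<in> R)"

definition ideal_of :: "'a::comm_ring_1 set \<Rightarrow> 'a set \<Rightarrow> bool" where
  "ideal_of R I \<longleftrightarrow> I \<subseteq> R \<and> 0 \<in> I \<and> (\<forall>x\<in>I. \<forall>y\<in>I. x + y \<in> I) \<and>
     (\<forall>r\<in>R. \<forall>x\<in>I. r * x \<in> I)"

definition chain_ring :: "'a::comm_ring_1 set \<Rightarrow> bool" where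
  "chain_ring R \<longleftrightarrow> subring_of R \<and>
     (\<forall>I J. ideal_of R I \<and> ideal_of R J \<longrightarrow> I \<subseteq> J \<or> J \<subseteq> I)"

definition max_ideal :: "'a::comm_ring_1 set \<Rightarrow> 'a set" where
  "max_ideal R = {r \<in> R. \<not> (\<exists>s\<in>R. r * s = 1)}"

text \<open>q = |R / m| = |R| / |m|.\<close>
definition res_card :: "'a::comm_ring_1 set \<Rightarrow> nat" where
  "res_card R = card R div card (max_ideal R)"

definition ext_ideal :: "'a::comm_ring_1 set \<Rightarrow> 'a set" where
  "ext_ideal R = {x. \<exists>n (f::nat \<Rightarrow> 'a) g. (\<forall>i<n. f i \<in> max_ideal R) \<and> x = (\<Sum>i<n. f i * g i)}"

definition Rpoly :: "'a::comm_ring_1 set \<Rightarrow> 'a poly \<Rightarrow> bool" where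
  "Rpoly R p \<longleftrightarrow> (\<forall>i. coeff p i \<in> R)"

definition irreducible_mod :: "'a::comm_ring_1 set \<Rightarrow> 'a poly \<Rightarrow> bool" where
  "irreducible_mod R h \<longleftrightarrow> 0 < degree h \<and>
     \<not> (\<exists>f g. Rpoly R f \<and> Rpoly R g \<and> 0 < degree f \<and> 0 < degree g \<and>
            degree f + degree g = degree h \<and>
            lead_coeff f \<notin> max_ideal R \<and> lead_coeff g \<notin> max_ideal R \<and>
            (\<forall>k. coeff (h - f * g) k \<in> max_ideal R))"

definition ring_aut :: "('a::comm_ring_1 \<Rightarrow> 'a) \<Rightarrow> bool" where
  "ring_aut \<sigma> \<longleftrightarrow> bij \<sigma> \<and> \<sigma> 1 = 1 \<and> (\<forall>x y. \<sigma> (x + y) = \<sigma> x + \<sigma> y \<and> \<sigma> (x * y) = \<sigma> x * \<sigma> y)"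

text \<open>The standing setting: R finite commutative chain ring, S (= the type 'a) equals
  R[x]/(h) via x \<mapsto> \<theta>, with h monic irreducible mod m; \<sigma> a ring automorphism of S
  generating Gal(S/R), fixed ring R, reducing to y \<mapsto> y^q modulo M = mS.\<close>
definition galois_setting :: "'a::comm_ring_1 set \<Rightarrow> 'a poly \<Rightarrow> 'a \<Rightarrow> ('a \<Rightarrow> 'a) \<Rightarrow> bool" where
  "galois_setting R h \<theta> \<sigma> \<longleftrightarrow>
     finite R \<and> (0::'a) \<noteq> 1 \<and> chain_ring R \<and>
     Rpoly R h \<and> lead_coeff h = 1 \<and> irreducible_mod R h \<and>
     poly h \<theta> = 0 \<and> (\<forall>s. \<exists>!f. Rpoly R f \<and> degree f < degree h \<and> poly f \<theta> = s) \<and>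
     ring_aut \<sigma> \<and> {x. \<sigma> x = x} = R \<and>
     (\<forall>\<tau>. ring_aut \<tau> \<and> (\<forall>r\<in>R. \<tau> r = r) \<longrightarrow> (\<exists>k. \<tau> = \<sigma> ^^ k)) \<and>
     (\<forall>y. \<sigma> y - y ^ res_card R \<in> ext_ideal R)"

text \<open>Skew polynomials S[x;\<sigma>] are represented by their coefficient sequences (type 'a poly);
  multiplication uses x a = \<sigma>(a) x.\<close>
definition skew_mult :: "('a::comm_ring_1 \<Rightarrow> 'a) \<Rightarrow> 'a poly \<Rightarrow> 'a poly \<Rightarrow> 'a poly" where
  "skew_mult \<sigma> f g = (\<Sum>i\<le>degree f. monom (coeff f i) i * map_poly (\<sigma> ^^ i) g)"

definition skew_prod :: "('a::comm_ring_1 \<Rightarrow> 'a) \<Rightarrow> 'a poly list \<Rightarrow> 'a poly" where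
  "skew_prod \<sigma> ps = foldr (skew_mult \<sigma>) ps 1"

definition skew_eval :: "('a::comm_ring_1 \<Rightarrow> 'a) \<Rightarrow> 'a poly \<Rightarrow> 'a \<Rightarrow> 'a" where
  "skew_eval \<sigma> F b = (THE c. \<exists>Q. F = skew_mult \<sigma> Q [:- b, 1:] + [:c:])"

definition unit_inv :: "'a::comm_ring_1 \<Rightarrow> 'a" where
  "unit_inv b = (THE y. b * y = 1)"

text \<open>a^\<beta> = \<sigma>(\<beta>) a \<beta>^{-1}.\<close>
definition sconj :: "('a::comm_ring_1 \<Rightarrow> 'a) \<Rightarrow> 'a \<Rightarrow> 'a \<Rightarrow> 'a" where
  "sconj \<sigma> \<beta> a = \<sigma> \<beta> * a * unit_inv \<beta>"

definition is_unit_S :: "'a::comm_ring_1 \<Rightarrow> bool" where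
  "is_unit_S a \<longleftrightarrow> (\<exists>b. a * b = 1)"

definition idx_pairs :: "(nat \<Rightarrow> nat) \<Rightarrow> nat \<Rightarrow> nat \<Rightarrow> (nat \<times> nat) list" where
  "idx_pairs n i j = concat (map (\<lambda>u. map (\<lambda>v. (u, v)) [1..<n u + 1]) [1..<i])
                     @ map (\<lambda>v. (i, v)) [1..<j + 1]"

text \<open>G_{i,j} = (x - a_i^{\<gamma>_{i,j}}) ... (x - a_1^{\<gamma>_{1,1}}).\<close>
definition G_poly :: "('a::comm_ring_1 \<Rightarrow> 'a) \<Rightarrow> (nat \<Rightarrow> 'a) \<Rightarrow> (nat \<Rightarrow> nat \<Rightarrow> 'a) \<Rightarrow>
    (nat \<Rightarrow> nat) \<Rightarrow> nat \<Rightarrow> nat \<Rightarrow> 'a poly" where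
  "G_poly \<sigma> a \<gamma> n i j =
     skew_prod \<sigma> (rev (map (\<lambda>(u, v). [:- sconj \<sigma> (\<gamma> u v) (a u), 1:]) (idx_pairs n i j)))"

end

theory Submission
  imports Defs
begin


lemma ra_add: "ring_aut \<sigma> \<Longrightarrow> \<sigma> (x + y) = \<sigma> x + \<sigma> y" by (simp add: ring_aut_def)
lemma ra_mult: "ring_aut \<sigma> \<Longrightarrow> \<sigma> (x * y) = \<sigma> x * \<sigma> y" by (simp add: ring_aut_def)
lemma ra_one: "ring_aut \<sigma> \<Longrightarrow> \<sigma> 1 = 1" by (simp add: ring_aut_def)
lemma ra_zero: "ring_aut \<sigma> \<Longrightarrow> \<sigma> 0 = 0"
  using ra_add[of \<sigma> 0 0] by simp
lemma ra_uminus: "ring_aut \<sigma> \<Longrightarrow> \<sigma> (- x) = - \<sigma> x"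
  using ra_add[of \<sigma> x "-x"] ra_zero[of \<sigma>] by (simp add: eq_neg_iff_add_eq_0 add.commute)
lemma ra_diff: "ring_aut \<sigma> \<Longrightarrow> \<sigma> (x - y) = \<sigma> x - \<sigma> y"
  using ra_add[of \<sigma> x "-y"] ra_uminus[of \<sigma> y] by simp
lemma ra_inj: "ring_aut \<sigma> \<Longrightarrow> \<sigma> x = \<sigma> y \<Longrightarrow> x = y"
  by (simp add: ring_aut_def bij_def inj_def)
lemma ra_pow: "ring_aut \<sigma> \<Longrightarrow> \<sigma> (x ^ k) = \<sigma> x ^ k"
  by (induction k) (simp_all add: ra_one ra_mult)
lemma ra_sum: "ring_aut \<sigma> \<Longrightarrow> \<sigma> (sum g A) = (\<Sum>i\<in>A. \<sigma> (g i))"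
  using sum_comp_morphism[of \<sigma> g A] by (simp add: ra_zero ra_add o_def)

lemma ra_funpow: "ring_aut \<sigma> \<Longrightarrow> ring_aut (\<sigma> ^^ k)"
proof (induction k)
  case 0 then show ?case by (simp add: ring_aut_def bij_id[unfolded id_def])
next
  case (Suc k)
  then show ?case unfolding ring_aut_def
    by (auto simp: bij_comp)
qed

lemma coeff_skew_mult:
  assumes "ring_aut \<sigma>"
  shows "coeff (skew_mult \<sigma> f g) n = (\<Sum>i\<le>n. coeff f i * (\<sigma> ^^ i) (coeff g (n - i)))"
proof -
  have z: "(\<sigma> ^^ i) 0 = 0" for i using ra_zero[OF ra_funpow[OF assms]] .
  have cm: "coeff (map_poly (\<sigma> ^^ i) g) k = (\<sigma> ^^ i) (coeff g k)" for i k
    using coeff_map_poly[of "\<sigma> ^^ i" g k] z by simp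
  have "coeff (skew_mult \<sigma> f g) n = (\<Sum>i\<le>degree f. if n < i then 0 else coeff f i * (\<sigma> ^^ i) (coeff g (n - i)))"
    unfolding skew_mult_def coeff_sum coeff_monom_mult cm by (simp add: not_le)
  also have "\<dots> = (\<Sum>i\<le>max n (degree f). if n < i then 0 else coeff f i * (\<sigma> ^^ i) (coeff g (n - i)))"
    by (rule sum.mono_neutral_left) (auto simp: coeff_eq_0)
  also have "\<dots> = (\<Sum>i\<le>n. coeff f i * (\<sigma> ^^ i) (coeff g (n - i)))"
    by (rule sum.mono_neutral_cong_right) auto
  finally show ?thesis .
qed

lemma cmap: "ring_aut \<sigma> \<Longrightarrow> coeff (map_poly \<sigma> p) k = \<sigma> (coeff p k)"
  using coeff_map_poly[of \<sigma> p k] ra_zero[of \<sigma>] by simp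

lemma skew_mult_lin:
  assumes "ring_aut \<sigma>"
  shows "skew_mult \<sigma> [:- c, 1:] F = pCons 0 (map_poly \<sigma> F) - smult c F"
proof (rule poly_eqI)
  fix n
  show "coeff (skew_mult \<sigma> [:- c, 1:] F) n = coeff (pCons 0 (map_poly \<sigma> F) - smult c F) n"
  proof (cases n)
    case 0 then show ?thesis by (simp add: coeff_skew_mult[OF assms])
  next
    case (Suc m)
    have "coeff (skew_mult \<sigma> [:- c, 1:] F) n = (\<Sum>i\<le>Suc m. coeff [:- c, 1:] i * (\<sigma> ^^ i) (coeff F (Suc m - i)))"
      by (simp add: coeff_skew_mult[OF assms] Suc)
    also have "\<dots> = (\<Sum>i\<in>{0,1}. coeff [:- c, 1:] i * (\<sigma> ^^ i) (coeff F (Suc m - i)))"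
      by (rule sum.mono_neutral_right) (auto simp: coeff_pCons split: nat.splits)
    also have "\<dots> = - c * coeff F (Suc m) + \<sigma> (coeff F m)" by simp
    finally show ?thesis by (simp add: Suc cmap[OF assms])
  qed
qed

lemma skew_mult_add1:
  assumes "ring_aut \<sigma>"
  shows "skew_mult \<sigma> (A + B) P = skew_mult \<sigma> A P + skew_mult \<sigma> B P"
  by (rule poly_eqI) (simp add: coeff_skew_mult[OF assms] distrib_right sum.distrib)

lemma skew_mult_diff1:
  assumes "ring_aut \<sigma>"
  shows "skew_mult \<sigma> (A - B) P = skew_mult \<sigma> A P - skew_mult \<sigma> B P"
  by (rule poly_eqI) (simp add: coeff_skew_mult[OF assms] left_diff_distrib sum_subtractf)

lemma skew_mult_smult1:
  assumes "ring_aut \<sigma>"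
  shows "skew_mult \<sigma> (smult c A) P = smult c (skew_mult \<sigma> A P)"
  by (rule poly_eqI) (simp add: coeff_skew_mult[OF assms] sum_distrib_left mult.assoc)

lemma skew_mult_const1:
  assumes "ring_aut \<sigma>"
  shows "skew_mult \<sigma> [:e:] P = smult e P"
proof (rule poly_eqI)
  fix n
  have "coeff (skew_mult \<sigma> [:e:] P) n = (\<Sum>i\<in>{0}. coeff [:e:] i * (\<sigma> ^^ i) (coeff P (n - i)))"
    unfolding coeff_skew_mult[OF assms]
    by (rule sum.mono_neutral_right) (auto simp: coeff_pCons split: nat.splits)
  then show "coeff (skew_mult \<sigma> [:e:] P) n = coeff (smult e P) n" by simp
qed

lemma skew_mult_zero1:
  assumes "ring_aut \<sigma>"
  shows "skew_mult \<sigma> 0 P = 0"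
  by (rule poly_eqI) (simp add: coeff_skew_mult[OF assms])

lemma skew_mult_shift1:
  assumes "ring_aut \<sigma>"
  shows "skew_mult \<sigma> (pCons 0 (map_poly \<sigma> Q)) P = pCons 0 (map_poly \<sigma> (skew_mult \<sigma> Q P))"
proof (rule poly_eqI)
  fix n
  show "coeff (skew_mult \<sigma> (pCons 0 (map_poly \<sigma> Q)) P) n = coeff (pCons 0 (map_poly \<sigma> (skew_mult \<sigma> Q P))) n"
  proof (cases n)
    case 0 then show ?thesis by (simp add: coeff_skew_mult[OF assms])
  next
    case (Suc m)
    have "coeff (skew_mult \<sigma> (pCons 0 (map_poly \<sigma> Q)) P) n
        = (\<Sum>i\<le>Suc m. coeff (pCons 0 (map_poly \<sigma> Q)) i * (\<sigma> ^^ i) (coeff P (Suc m - i)))"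
      by (simp add: coeff_skew_mult[OF assms] Suc)
    also have "\<dots> = (\<Sum>i\<le>m. \<sigma> (coeff Q i) * \<sigma> ((\<sigma> ^^ i) (coeff P (m - i))))"
      by (simp add: sum.atMost_Suc_shift cmap[OF assms] del: sum.atMost_Suc)
    also have "\<dots> = \<sigma> (coeff (skew_mult \<sigma> Q P) m)"
      by (simp add: coeff_skew_mult[OF assms] ra_sum[OF assms] ra_mult[OF assms])
    finally show ?thesis by (simp add: Suc cmap[OF assms])
  qed
qed

lemma skew_mult_lin_assoc:
  assumes "ring_aut \<sigma>"
  shows "skew_mult \<sigma> [:- c, 1:] (skew_mult \<sigma> Q P) = skew_mult \<sigma> (skew_mult \<sigma> [:- c, 1:] Q) P"
  by (simp add: skew_mult_lin[OF assms] skew_mult_diff1[OF assms] skew_mult_shift1[OF assms]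
      skew_mult_smult1[OF assms])

lemma skew_rem_unique0:
  assumes "ring_aut \<sigma>" "skew_mult \<sigma> D [:- b, 1:] = [:e:]"
  shows "e = 0"
proof (cases "D = 0")
  case True then show ?thesis using assms by (simp add: skew_mult_zero1)
next
  case False
  let ?d = "degree D"
  have "coeff (skew_mult \<sigma> D [:- b, 1:]) (Suc ?d)
      = (\<Sum>i\<le>Suc ?d. coeff D i * (\<sigma> ^^ i) (coeff [:- b, 1:] (Suc ?d - i)))"
    by (simp add: coeff_skew_mult[OF assms(1)])
  also have "\<dots> = (\<Sum>i\<in>{?d}. coeff D i * (\<sigma> ^^ i) (coeff [:- b, 1:] (Suc ?d - i)))"
  proof (rule sum.mono_neutral_right)
    show "\<forall>i\<in>{..Suc ?d} - {?d}. coeff D i * (\<sigma> ^^ i) (coeff [:- b, 1:] (Suc ?d - i)) = 0"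
    proof
      fix i assume i: "i \<in> {..Suc ?d} - {?d}"
      show "coeff D i * (\<sigma> ^^ i) (coeff [:- b, 1:] (Suc ?d - i)) = 0"
      proof (cases "i = Suc ?d")
        case True then show ?thesis by (simp add: coeff_eq_0)
      next
        case False
        then have "Suc ?d - i = Suc (Suc (?d - Suc i))" using i by auto
        then show ?thesis using ra_zero[OF ra_funpow[OF assms(1)]] by (simp add: coeff_pCons)
      qed
    qed
  qed auto
  also have "\<dots> = lead_coeff D" using ra_one[OF ra_funpow[OF assms(1)]] by simp
  finally have "coeff [:e:] (Suc ?d) = lead_coeff D" using assms(2) by simp
  then show ?thesis using False by simp
qed

lemma skew_eval_eq:
  assumes "ring_aut \<sigma>" "F = skew_mult \<sigma> Q [:- b, 1:] + [:c:]"
  shows "skew_eval \<sigma> F b = c"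
  unfolding skew_eval_def
proof (rule the_equality)
  show "\<exists>Q. F = skew_mult \<sigma> Q [:- b, 1:] + [:c:]" using assms by blast
next
  fix c' assume "\<exists>Q. F = skew_mult \<sigma> Q [:- b, 1:] + [:c':]"
  then obtain Q' where Q': "F = skew_mult \<sigma> Q' [:- b, 1:] + [:c':]" by blast
  have "skew_mult \<sigma> (Q - Q') [:- b, 1:] = [:c' - c:]"
  proof -
    have e: "skew_mult \<sigma> Q [:- b, 1:] + [:c:] = skew_mult \<sigma> Q' [:- b, 1:] + [:c':]"
      using Q' assms(2) by simp
    have e2: "skew_mult \<sigma> Q [:- b, 1:] = skew_mult \<sigma> Q' [:- b, 1:] + [:c':] - [:c:]"
      using e by (metis add_diff_cancel_right')
    have e3: "[:c':] - [:c:] = [:c' - c:]" by simp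
    have "skew_mult \<sigma> Q [:- b, 1:] - skew_mult \<sigma> Q' [:- b, 1:] = [:c':] - [:c:]"
      using e2 by simp
    then show ?thesis using e3 by (simp add: skew_mult_diff1[OF assms(1)])
  qed
  from skew_rem_unique0[OF assms(1) this] show "c' = c" by simp
qed

definition Pr :: "('a::comm_ring_1 \<Rightarrow> 'a) \<Rightarrow> 'a list \<Rightarrow> 'a poly" where
  "Pr \<sigma> cs = skew_prod \<sigma> (map (\<lambda>c. [:- c, 1:]) cs)"

lemma Pr_Nil: "Pr \<sigma> [] = 1" by (simp add: Pr_def skew_prod_def)
lemma Pr_Cons: "Pr \<sigma> (c # cs) = skew_mult \<sigma> [:- c, 1:] (Pr \<sigma> cs)"
  by (simp add: Pr_def skew_prod_def)

fun evr :: "('a::comm_ring_1 \<Rightarrow> 'a) \<Rightarrow> 'a \<Rightarrow> 'a list \<Rightarrow> 'a" where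
  "evr \<sigma> b [] = 1"
| "evr \<sigma> b (c # cs) = \<sigma> (evr \<sigma> b cs) * b - c * evr \<sigma> b cs"

fun Lam :: "('a::comm_ring_1 \<Rightarrow> 'a) \<Rightarrow> 'a \<Rightarrow> 'a list \<Rightarrow> 'a \<Rightarrow> 'a" where
  "Lam \<sigma> a [] y = y"
| "Lam \<sigma> a (c # cs) y = \<sigma> (Lam \<sigma> a cs y) * a - c * Lam \<sigma> a cs y"

lemma map_poly_ra_add:
  "ring_aut \<sigma> \<Longrightarrow> map_poly \<sigma> (X + Y) = map_poly \<sigma> X + map_poly \<sigma> Y"
  by (rule poly_eqI) (simp add: cmap ra_add)

lemma map_poly_ra_const: "ring_aut \<sigma> \<Longrightarrow> map_poly \<sigma> [:e:] = [:\<sigma> e:]"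
  by (rule poly_eqI) (simp add: cmap ra_zero coeff_pCons split: nat.splits)

lemma Pr_rem:
  assumes "ring_aut \<sigma>"
  shows "\<exists>Q. Pr \<sigma> cs = skew_mult \<sigma> Q [:- b, 1:] + [:evr \<sigma> b cs:]"
proof (induction cs)
  case Nil
  show ?case by (rule exI[of _ 0]) (simp add: Pr_Nil skew_mult_zero1[OF assms] one_pCons)
next
  case (Cons c cs)
  then obtain Q where Q: "Pr \<sigma> cs = skew_mult \<sigma> Q [:- b, 1:] + [:evr \<sigma> b cs:]" by blast
  let ?e = "evr \<sigma> b cs"
  have L: "skew_mult \<sigma> [:- c, 1:] (X + Y) = skew_mult \<sigma> [:- c, 1:] X + skew_mult \<sigma> [:- c, 1:] Y" for X Y
    by (simp add: skew_mult_lin[OF assms] map_poly_ra_add[OF assms] smult_add_right algebra_simps)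
  have c: "skew_mult \<sigma> [:- c, 1:] [:?e:] = skew_mult \<sigma> [:\<sigma> ?e:] [:- b, 1:] + [:\<sigma> ?e * b - c * ?e:]"
    by (simp add: skew_mult_lin[OF assms] skew_mult_const1[OF assms] map_poly_ra_const[OF assms] algebra_simps)
  have "Pr \<sigma> (c # cs) = skew_mult \<sigma> (skew_mult \<sigma> [:- c, 1:] Q + [:\<sigma> ?e:]) [:- b, 1:]
       + [:evr \<sigma> b (c # cs):]"
    by (simp add: Pr_Cons Q L c skew_mult_lin_assoc[OF assms] skew_mult_add1[OF assms])
  then show ?case by blast
qed

lemma skew_eval_Pr:
  assumes "ring_aut \<sigma>"
  shows "skew_eval \<sigma> (Pr \<sigma> cs) b = evr \<sigma> b cs"
  using Pr_rem[OF assms, of cs b] skew_eval_eq[OF assms] by blast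

lemma Pr_deg:
  assumes "ring_aut \<sigma>" "(0::'a::comm_ring_1) \<noteq> 1"
  shows "degree (Pr \<sigma> cs) = length cs \<and> lead_coeff (Pr \<sigma> (cs :: 'a list)) = 1"
proof (induction cs)
  case Nil then show ?case by (simp add: Pr_Nil)
next
  case (Cons c cs)
  let ?F = "Pr \<sigma> cs"
  let ?d = "length cs"
  have F: "Pr \<sigma> (c # cs) = pCons 0 (map_poly \<sigma> ?F) - smult c ?F"
    by (simp add: Pr_Cons skew_mult_lin[OF assms(1)])
  have c1: "coeff (Pr \<sigma> (c # cs)) (Suc ?d) = 1"
    using Cons by (simp add: F cmap[OF assms(1)] coeff_eq_0) (metis ra_one[OF assms(1)])
  have "degree (Pr \<sigma> (c # cs)) \<le> Suc ?d"
  proof (rule degree_le, intro allI impI)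
    fix i assume "Suc ?d < i"
    then show "coeff (Pr \<sigma> (c # cs)) i = 0"
      using Cons by (cases i) (auto simp: F cmap[OF assms(1)] ra_zero[OF assms(1)] coeff_eq_0)
  qed
  moreover have "Suc ?d \<le> degree (Pr \<sigma> (c # cs))"
    using c1 assms(2) by (intro le_degree) auto
  ultimately show ?case using c1 by simp
qed

lemma unit_inv: "is_unit_S b \<Longrightarrow> b * unit_inv b = 1"
  unfolding unit_inv_def is_unit_S_def
proof -
  assume "\<exists>c. b * c = 1"
  then obtain c where c: "b * c = 1" by blast
  have "(THE y. b * y = 1) = c"
  proof (rule the_equality)
    fix y assume "b * y = 1"
    then have "c * (b * y) = c" by simp
    then show "y = c" using c by (metis mult.assoc mult.commute mult_1_left)
  qed (rule c)
  then show "b * (THE y. b * y = 1) = 1" using c by simp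
qed

lemma evr_Lam:
  assumes "ring_aut \<sigma>" "is_unit_S \<beta>"
  shows "evr \<sigma> (sconj \<sigma> \<beta> a) cs * \<beta> = Lam \<sigma> a cs \<beta>"
proof (induction cs)
  case Nil then show ?case by simp
next
  case (Cons c cs)
  let ?E = "evr \<sigma> (sconj \<sigma> \<beta> a) cs"
  have inv: "\<beta> * unit_inv \<beta> = 1" by (rule unit_inv[OF assms(2)])
  have "evr \<sigma> (sconj \<sigma> \<beta> a) (c # cs) * \<beta>
      = \<sigma> ?E * \<sigma> \<beta> * a * (\<beta> * unit_inv \<beta>) - c * (?E * \<beta>)"
    by (simp add: sconj_def algebra_simps)
  also have "\<dots> = \<sigma> (?E * \<beta>) * a - c * (?E * \<beta>)"
    by (simp add: inv ra_mult[OF assms(1)])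
  finally show ?case using Cons by simp
qed



locale gs =
  fixes R :: "'a::comm_ring_1 set" and h :: "'a poly" and \<theta> :: 'a and \<sigma> :: "'a \<Rightarrow> 'a"
  assumes setting: "galois_setting R h \<theta> \<sigma>"
begin

lemma aut: "ring_aut \<sigma>" using setting by (simp add: galois_setting_def)
lemma finR: "finite R" using setting by (simp add: galois_setting_def)
lemma nz: "(0::'a) \<noteq> 1" using setting by (simp add: galois_setting_def)
lemma chain: "chain_ring R" using setting by (simp add: galois_setting_def)
lemma subR: "subring_of R" using chain by (simp add: chain_ring_def)
lemma zero_R: "0 \<in> R" using subR by (simp add: subring_of_def)
lemma one_R: "1 \<in> R" using subR by (simp add: subring_of_def)
lemma add_R: "x \<in> R \<Longrightarrow> y \<in> R \<Longrightarrow> x + y \<in> R" using subR by (simp add: subring_of_def)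
lemma mult_R: "x \<in> R \<Longrightarrow> y \<in> R \<Longrightarrow> x * y \<in> R" using subR by (simp add: subring_of_def)
lemma neg_R: "x \<in> R \<Longrightarrow> - x \<in> R" using subR by (simp add: subring_of_def)
lemma diff_R: "x \<in> R \<Longrightarrow> y \<in> R \<Longrightarrow> x - y \<in> R" using add_R[of x "- y"] neg_R[of y] by simp
lemma pow_R: "x \<in> R \<Longrightarrow> x ^ k \<in> R" by (induction k) (simp_all add: one_R mult_R)
lemma fixR: "\<sigma> x = x \<longleftrightarrow> x \<in> R"
proof -
  have "{x. \<sigma> x = x} = R" using setting by (simp add: galois_setting_def)
  then show ?thesis by blast
qed
lemma basis: "\<exists>!f. Rpoly R f \<and> degree f < degree h \<and> poly f \<theta> = s"
  using setting by (simp add: galois_setting_def)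
lemma degh: "0 < degree h" using setting by (simp add: galois_setting_def irreducible_mod_def)
lemma galois: "ring_aut \<tau> \<Longrightarrow> (\<forall>r\<in>R. \<tau> r = r) \<Longrightarrow> \<exists>k. \<tau> = \<sigma> ^^ k"
  using setting by (simp add: galois_setting_def)
lemma frob: "\<sigma> y - y ^ res_card R \<in> ext_ideal R"
  using setting by (simp add: galois_setting_def)

lemma total_div:
  assumes "a \<in> R" "b \<in> R"
  shows "(\<exists>s\<in>R. a = b * s) \<or> (\<exists>s\<in>R. b = a * s)"
proof -
  have id: "ideal_of R {x * s |s. s \<in> R}" if "x \<in> R" for x
  proof -
    have "{x * s |s. s \<in> R} \<subseteq> R" using that mult_R by auto
    moreover have "0 \<in> {x * s |s. s \<in> R}" using zero_R by (auto intro!: exI[of _ 0])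
    moreover have "\<forall>u\<in>{x * s |s. s \<in> R}. \<forall>v\<in>{x * s |s. s \<in> R}. u + v \<in> {x * s |s. s \<in> R}"
    proof (intro ballI)
      fix u v assume "u \<in> {x * s |s. s \<in> R}" "v \<in> {x * s |s. s \<in> R}"
      then obtain s1 s2 where "s1 \<in> R" "s2 \<in> R" "u = x * s1" "v = x * s2" by blast
      then show "u + v \<in> {x * s |s. s \<in> R}" using add_R by (auto simp: distrib_left intro!: exI[of _ "s1 + s2"])
    qed
    moreover have "\<forall>r\<in>R. \<forall>u\<in>{x * s |s. s \<in> R}. r * u \<in> {x * s |s. s \<in> R}"
    proof (intro ballI)
      fix r u assume "r \<in> R" "u \<in> {x * s |s. s \<in> R}"
      then obtain s1 where "s1 \<in> R" "u = x * s1" by blast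
      then show "r * u \<in> {x * s |s. s \<in> R}" using mult_R \<open>r \<in> R\<close>
        by (auto simp: mult.left_commute intro!: exI[of _ "r * s1"])
    qed
    ultimately show ?thesis unfolding ideal_of_def by blast
  qed
  from chain have "{a * s |s. s \<in> R} \<subseteq> {b * s |s. s \<in> R} \<or> {b * s |s. s \<in> R} \<subseteq> {a * s |s. s \<in> R}"
    unfolding chain_ring_def using id assms by blast
  moreover have "a \<in> {a * s |s. s \<in> R}" "b \<in> {b * s |s. s \<in> R}" using one_R by force+
  ultimately show ?thesis by blast
qed

lemma gen_exists:
  assumes "finite A" "A \<noteq> {}" "A \<subseteq> R"
  shows "\<exists>p\<in>A. \<forall>x\<in>A. \<exists>s\<in>R. x = p * s"
  using assms
proof (induction A rule: finite_ne_induct)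
  case (singleton x) then show ?case using one_R by (auto intro!: bexI[of _ 1])
next
  case (insert x F)
  then obtain p where p: "p \<in> F" "\<forall>y\<in>F. \<exists>s\<in>R. y = p * s" by auto
  have xR: "x \<in> R" and pR: "p \<in> R" using insert p by auto
  from total_div[OF xR pR] show ?case
  proof
    assume "\<exists>s\<in>R. x = p * s"
    then show ?thesis using p by auto
  next
    assume "\<exists>s\<in>R. p = x * s"
    then obtain s where s: "s \<in> R" "p = x * s" by auto
    have "\<forall>y\<in>insert x F. \<exists>s\<in>R. y = x * s"
    proof
      fix y assume "y \<in> insert x F"
      then show "\<exists>s\<in>R. y = x * s"
      proof
        assume "y = x" then show ?thesis using one_R by (auto intro!: bexI[of _ 1])
      next
        assume "y \<in> F"
        then obtain s' where "s' \<in> R" "y = p * s'" using p by auto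
        then show ?thesis using s by (auto intro!: bexI[of _ "s * s'"] simp: mult_R mult.assoc)
      qed
    qed
    then show ?thesis by auto
  qed
qed

abbreviation "mm \<equiv> max_ideal R"

lemma zero_mm: "0 \<in> mm" using zero_R nz by (simp add: max_ideal_def)

definition pi where "pi = (SOME p. p \<in> mm \<and> (\<forall>x\<in>mm. \<exists>s\<in>R. x = p * s))"

lemma pi: "pi \<in> mm \<and> (\<forall>x\<in>mm. \<exists>s\<in>R. x = pi * s)"
proof -
  have "finite mm" using finR by (rule rev_finite_subset) (auto simp: max_ideal_def)
  moreover have "mm \<subseteq> R" by (auto simp: max_ideal_def)
  ultimately have "\<exists>p. p \<in> mm \<and> (\<forall>x\<in>mm. \<exists>s\<in>R. x = p * s)"
    using gen_exists[of mm] zero_mm by blast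
  then show ?thesis unfolding pi_def by (rule someI_ex)
qed

lemma pi_mm: "pi \<in> mm" using pi by blast
lemma pi_R: "pi \<in> R" using pi_mm by (simp add: max_ideal_def)
lemma pi_nounit: "s \<in> R \<Longrightarrow> pi * s \<noteq> 1" using pi_mm by (auto simp: max_ideal_def)

lemma mm_char: "x \<in> mm \<longleftrightarrow> (\<exists>s\<in>R. x = pi * s)"
proof
  assume "x \<in> mm" then show "\<exists>s\<in>R. x = pi * s" using pi by blast
next
  assume "\<exists>s\<in>R. x = pi * s"
  then obtain s where s: "s \<in> R" "x = pi * s" by blast
  have "\<not> (\<exists>u\<in>R. x * u = 1)"
  proof
    assume "\<exists>u\<in>R. x * u = 1"
    then obtain u where "u \<in> R" "pi * (s * u) = 1" using s by (auto simp: mult.assoc)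
    then show False using pi_nounit mult_R s by blast
  qed
  then show "x \<in> mm" using s mult_R pi_R by (simp add: max_ideal_def)
qed

lemma not_mm: "x \<in> R \<Longrightarrow> x \<notin> mm \<Longrightarrow> \<exists>u\<in>R. x * u = 1"
  by (simp add: max_ideal_def)

lemma pi_nilp: "\<exists>k. pi ^ k = 0"
proof -
  have "range (\<lambda>k. pi ^ k) \<subseteq> R" using pow_R pi_R by auto
  then have fr: "finite (range (\<lambda>k::nat. pi ^ k))" using finR rev_finite_subset by blast
  have "\<not> inj (\<lambda>k::nat. pi ^ k)"
  proof
    assume "inj (\<lambda>k::nat. pi ^ k)"
    from finite_imageD[OF fr this] have "finite (UNIV :: nat set)" .
    then show False by simp
  qed
  then obtain i0 j0 :: nat where ij0: "i0 \<noteq> j0" "pi ^ i0 = pi ^ j0" unfolding inj_def by blast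
  obtain i j :: nat where ij: "i < j" "pi ^ i = pi ^ j"
  proof (cases "i0 < j0")
    case True then show ?thesis using that ij0 by blast
  next
    case False then have "j0 < i0" using ij0(1) by simp
    then show ?thesis using that[of j0 i0] ij0 by simp
  qed
  define d where "d = j - i"
  have d: "d = Suc (d - 1)" using ij d_def by simp
  have "j = i + d" using ij d_def by simp
  then have pj: "pi ^ j = pi ^ i * pi ^ d" by (simp add: power_add)
  have nm: "1 - pi ^ d \<notin> mm"
  proof
    assume "1 - pi ^ d \<in> mm"
    then obtain s where s: "s \<in> R" "1 - pi ^ d = pi * s" using mm_char by blast
    have pd: "pi ^ d = pi * pi ^ (d - 1)" using d by (metis power_Suc)
    have "pi * (s + pi ^ (d - 1)) = pi * s + pi ^ d" by (simp add: distrib_left pd)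
    also have "\<dots> = 1" using s(2) by (simp add: algebra_simps)
    finally have "pi * (s + pi ^ (d - 1)) = 1" .
    then show False using pi_nounit[OF add_R[OF s(1) pow_R[OF pi_R]]] by simp
  qed
  then obtain u where u: "u \<in> R" "(1 - pi ^ d) * u = 1" using not_mm[OF diff_R[OF one_R pow_R[OF pi_R]]] by blast
  have "pi ^ i * (1 - pi ^ d) = 0" using ij pj by (simp add: algebra_simps)
  then have "pi ^ i * (1 - pi ^ d) * u = 0" by simp
  then have "pi ^ i = 0" using u(2) by (simp only: mult.assoc mult_1_right)
  then show ?thesis by blast
qed

definition tt where "tt = (LEAST k. pi ^ k = 0)"

lemma tt: "pi ^ tt = 0" "tt \<ge> 1" "pi ^ (tt - 1) \<noteq> 0"
proof -
  show t0: "pi ^ tt = 0" unfolding tt_def using pi_nilp by (rule LeastI_ex)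
  show "tt \<ge> 1" using t0 nz by (cases tt) auto
  then show "pi ^ (tt - 1) \<noteq> 0" unfolding tt_def using not_less_Least[of "tt - 1" "\<lambda>k. pi ^ k = 0"]
    by (simp add: tt_def)
qed

lemma pi_tt1: "pi ^ (tt - 1) * pi = 0"
proof -
  have "pi ^ (tt - 1) * pi = pi ^ Suc (tt - 1)" by (simp add: power_Suc2)
  also have "Suc (tt - 1) = tt" using tt(2) by simp
  finally show ?thesis using tt(1) by simp
qed

lemma ann_R: "c \<in> R \<Longrightarrow> pi ^ (tt - 1) * c = 0 \<Longrightarrow> c \<in> mm"
proof (rule ccontr)
  assume "c \<in> R" "pi ^ (tt - 1) * c = 0" "c \<notin> mm"
  then obtain u where "c * u = 1" using not_mm by blast
  then have "pi ^ (tt - 1) * c * u = pi ^ (tt - 1)" by (simp add: mult.assoc)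
  then show False using tt(3) \<open>pi ^ (tt - 1) * c = 0\<close> by simp
qed


definition rep where "rep s = (THE f. Rpoly R f \<and> degree f < degree h \<and> poly f \<theta> = s)"

lemma rep: "Rpoly R (rep s)" "degree (rep s) < degree h" "poly (rep s) \<theta> = s"
proof -
  have "Rpoly R (rep s) \<and> degree (rep s) < degree h \<and> poly (rep s) \<theta> = s"
    unfolding rep_def using basis[of s] by (rule theI')
  then show "Rpoly R (rep s)" "degree (rep s) < degree h" "poly (rep s) \<theta> = s" by auto
qed

lemma rep_unique: "Rpoly R f \<Longrightarrow> degree f < degree h \<Longrightarrow> poly f \<theta> = s \<Longrightarrow> rep s = f"
  using basis[of s] rep[of s] by blast

lemma rep_const: "r \<in> R \<Longrightarrow> rep r = [:r:]"
  by (rule rep_unique) (auto simp: Rpoly_def coeff_pCons zero_R degh split: nat.splits)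

lemma rep_smult: "r \<in> R \<Longrightarrow> rep (r * s) = smult r (rep s)"
proof (rule rep_unique)
  assume r: "r \<in> R"
  show "Rpoly R (smult r (rep s))" using rep(1)[of s] r mult_R by (auto simp: Rpoly_def)
  show "degree (smult r (rep s)) < degree h" using rep(2)[of s] degree_smult_le[of r "rep s"] by linarith
  show "poly (smult r (rep s)) \<theta> = r * s" using rep(3)[of s] by simp
qed

definition inM where "inM y \<longleftrightarrow> (\<exists>z. y = pi * z)"

lemma coeffs_mm_M:
  assumes "\<forall>k. coeff p k \<in> mm"
  shows "inM (poly p \<theta>)"
proof -
  have "\<forall>k. \<exists>s. coeff p k = pi * s" using assms mm_char by blast
  then obtain s where s: "\<forall>k. coeff p k = pi * s k" by metis
  have "poly p \<theta> = (\<Sum>i\<le>degree p. coeff p i * \<theta> ^ i)" by (rule poly_altdef)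
  also have "\<dots> = pi * (\<Sum>i\<le>degree p. s i * \<theta> ^ i)"
    by (simp add: s sum_distrib_left mult.assoc)
  finally show ?thesis unfolding inM_def by blast
qed

lemma inM_add: "inM x \<Longrightarrow> inM y \<Longrightarrow> inM (x + y)"
  unfolding inM_def by (metis distrib_left)
lemma inM_neg: "inM x \<Longrightarrow> inM (- x)"
  unfolding inM_def by (metis mult_minus_right)
lemma inM_diff: "inM x \<Longrightarrow> inM y \<Longrightarrow> inM (x - y)"
  using inM_add[of x "- y"] inM_neg[of y] by simp
lemma inM_mult: "inM x \<Longrightarrow> inM (x * y)"
  unfolding inM_def by (metis mult.assoc)
lemma inM_mult2: "inM y \<Longrightarrow> inM (x * y)"
  using inM_mult[of y x] by (simp add: mult.commute)
lemma inM_0: "inM 0" unfolding inM_def by (rule exI[of _ 0]) simp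
lemma inM_sigma: "inM x \<Longrightarrow> inM (\<sigma> x)"
proof -
  assume "inM x"
  then obtain z where "x = pi * z" unfolding inM_def by blast
  moreover have "\<sigma> pi = pi" using fixR pi_R by blast
  ultimately have "\<sigma> x = pi * \<sigma> z" using ra_mult[OF aut] by simp
  then show ?thesis unfolding inM_def by blast
qed
lemma mm_inM: "x \<in> mm \<Longrightarrow> inM x" unfolding inM_def using mm_char by blast

lemma inM_nilp: "inM y \<Longrightarrow> y ^ tt = 0"
  unfolding inM_def using tt(1) by (auto simp: power_mult_distrib)

lemma inM_nounit: "inM y \<Longrightarrow> \<not> is_unit_S y"
proof
  assume "inM y" "is_unit_S y"
  then obtain w where "y * w = 1" unfolding is_unit_S_def by blast
  then have "(y * w) ^ tt = 1" by simp
  then have "y ^ tt * w ^ tt = 1" by (simp add: power_mult_distrib)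
  then show False using inM_nilp[OF \<open>inM y\<close>] nz by simp
qed

lemma ann_S:
  assumes "pi ^ (tt - 1) * y = 0"
  shows "inM y"
proof -
  have "rep (pi ^ (tt - 1) * y) = smult (pi ^ (tt - 1)) (rep y)" by (rule rep_smult[OF pow_R[OF pi_R]])
  moreover have "rep (pi ^ (tt - 1) * y) = 0" using assms rep_const[OF zero_R] by simp
  ultimately have "\<forall>k. pi ^ (tt - 1) * coeff (rep y) k = 0"
    by (metis coeff_smult coeff_0)
  then have "\<forall>k. coeff (rep y) k \<in> mm" using ann_R rep(1)[of y] by (auto simp: Rpoly_def)
  from coeffs_mm_M[OF this] show ?thesis using rep(3)[of y] by simp
qed

lemma inM_R: "x \<in> R \<Longrightarrow> inM x \<Longrightarrow> x \<in> mm"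
proof -
  assume x: "x \<in> R" "inM x"
  then obtain z where z: "x = pi * z" unfolding inM_def by blast
  have "pi ^ (tt - 1) * x = (pi ^ (tt - 1) * pi) * z" by (simp add: z mult.assoc)
  also have "\<dots> = 0" by (simp only: pi_tt1 mult_zero_left)
  finally show ?thesis using ann_R x(1) by blast
qed

lemma lift:
  assumes "inM (\<sigma> y - y)"
  shows "\<exists>r\<in>R. inM (y - r)"
proof -
  obtain z where z: "\<sigma> y - y = pi * z" using assms unfolding inM_def by blast
  let ?p = "pi ^ (tt - 1)"
  have pR: "?p \<in> R" by (rule pow_R[OF pi_R])
  have "?p * (\<sigma> y - y) = (?p * pi) * z" by (simp add: z mult.assoc)
  then have "?p * (\<sigma> y - y) = 0" by (simp only: pi_tt1 mult_zero_left)
  then have e1: "?p * \<sigma> y = ?p * y" by (simp add: right_diff_distrib)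
  have sp: "\<sigma> ?p = ?p" using fixR pR by blast
  have "\<sigma> (?p * y) = \<sigma> ?p * \<sigma> y" by (rule ra_mult[OF aut])
  also have "\<dots> = ?p * \<sigma> y" by (simp only: sp)
  also have "\<dots> = ?p * y" by (rule e1)
  finally have "\<sigma> (?p * y) = ?p * y" .
  then have wR: "?p * y \<in> R" using fixR by blast
  have "smult ?p (rep y) = [:?p * y:]" using rep_smult[OF pR, of y] rep_const[OF wR] by simp
  then have ck: "\<forall>k\<ge>1. ?p * coeff (rep y) k = 0"
  proof (intro allI impI)
    fix k :: nat assume k: "k \<ge> 1"
    assume eq: "smult ?p (rep y) = [:?p * y:]"
    have "coeff (smult ?p (rep y)) k = coeff [:?p * y:] k" by (simp only: eq)
    also have "\<dots> = 0" using k by (cases k) auto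
    finally show "?p * coeff (rep y) k = 0" by simp
  qed
  let ?r = "coeff (rep y) 0"
  have rR: "?r \<in> R" using rep(1)[of y] by (simp add: Rpoly_def)
  have "\<forall>k. coeff (rep y - [:?r:]) k \<in> mm"
  proof
    fix k show "coeff (rep y - [:?r:]) k \<in> mm"
    proof (cases k)
      case 0 then show ?thesis using zero_mm by simp
    next
      case (Suc k') then show ?thesis using ck ann_R rep(1)[of y] by (auto simp: Rpoly_def)
    qed
  qed
  from coeffs_mm_M[OF this] have "inM (y - ?r)" using rep(3)[of y] by simp
  then show ?thesis using rR by blast
qed

lemma one_minus_M_unit: "inM w \<Longrightarrow> is_unit_S (1 - w)"
proof -
  assume "inM w"
  have "1 - w ^ tt = (1 - w) * (\<Sum>i<tt. w ^ i)" by (rule one_diff_power_eq)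
  then have "(1 - w) * (\<Sum>i<tt. w ^ i) = 1" using inM_nilp[OF \<open>inM w\<close>] by simp
  then show ?thesis unfolding is_unit_S_def by blast
qed

lemma unit_of_mult: "is_unit_S (x * y) \<Longrightarrow> is_unit_S x"
  unfolding is_unit_S_def by (metis mult.assoc)

lemma sigma_period: "\<exists>e\<ge>1. \<sigma> ^^ e = id"
proof -
  have b: "bij \<sigma>" using aut by (simp add: ring_aut_def)
  have inj: "inj \<sigma>" and surj: "surj \<sigma>" using b by (auto simp: bij_def)
  let ?i = "inv \<sigma>"
  have fi: "\<sigma> (?i x) = x" for x using surj by (simp add: surj_f_inv_f)
  have if_: "?i (\<sigma> x) = x" for x using inj by simp
  have "ring_aut ?i"
    unfolding ring_aut_def
  proof (intro conjI allI)
    show "bij ?i" by (rule bij_imp_bij_inv[OF b])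
    show "?i 1 = 1" using if_[of 1] ra_one[OF aut] by simp
    fix x y
    show "?i (x + y) = ?i x + ?i y"
      using if_[of "?i x + ?i y"] by (simp add: ra_add[OF aut] fi)
    show "?i (x * y) = ?i x * ?i y"
      using if_[of "?i x * ?i y"] by (simp add: ra_mult[OF aut] fi)
  qed
  moreover have "\<forall>r\<in>R. ?i r = r"
  proof
    fix r assume "r \<in> R"
    then have "\<sigma> r = r" using fixR by blast
    then show "?i r = r" using if_[of r] by simp
  qed
  ultimately obtain k where k: "?i = \<sigma> ^^ k" using galois by blast
  have "\<sigma> ^^ Suc k = (\<sigma> ^^ k) \<circ> \<sigma>" by (rule funpow_Suc_right)
  also have "\<dots> = id" unfolding k[symmetric] by (rule ext) (simp add: if_)
  finally show ?thesis by (intro exI[of _ "Suc k"]) simp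
qed

lemma ext_inM: "x \<in> ext_ideal R \<Longrightarrow> inM x"
proof -
  assume "x \<in> ext_ideal R"
  then obtain n :: nat and f g where fg: "\<forall>i<n. f i \<in> mm" "x = (\<Sum>i<n. f i * g i)"
    unfolding ext_ideal_def by auto
  have "inM (\<Sum>i\<in>{..<n}. f i * g i)" using fg(1)
  proof (induction n)
    case 0 then show ?case using inM_0 by simp
  next
    case (Suc n) then show ?case using inM_add inM_mult mm_inM by simp
  qed
  then show ?thesis using fg(2) by simp
qed


lemma frob_M: "inM (\<sigma> y - y ^ res_card R)" using ext_inM[OF frob] .

lemma frob_iter: "inM ((\<sigma> ^^ k) y - y ^ (res_card R ^ k))"
proof (induction k)
  case 0 then show ?case using inM_0 by simp
next
  case (Suc k)
  let ?q = "res_card R"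
  have a: "inM (\<sigma> ((\<sigma> ^^ k) y) - \<sigma> (y ^ (?q ^ k)))"
    using inM_sigma[OF Suc.IH] by (simp add: ra_diff[OF aut])
  have b: "inM (\<sigma> (y ^ (?q ^ k)) - (y ^ (?q ^ k)) ^ ?q)" by (rule frob_M)
  have "(y ^ (?q ^ k)) ^ ?q = y ^ (?q ^ Suc k)" by (simp add: power_mult[symmetric] mult.commute)
  then show ?case using inM_add[OF a b] by simp
qed

lemma unit_char:
  assumes "\<not> inM y"
  shows "is_unit_S y"
proof -
  let ?q = "res_card R"
  have q0: "?q \<noteq> 0"
  proof
    assume "?q = 0"
    then have "inM (-1)" using frob_M[of 0] ra_zero[OF aut] by simp
    then have "inM 1" using inM_neg by fastforce
    then show False using inM_nounit unfolding is_unit_S_def by fastforce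
  qed
  show ?thesis
  proof (cases "?q = 1")
    case True
    then have "inM (\<sigma> y - y)" using frob_M[of y] by simp
    then obtain r where r: "r \<in> R" "inM (y - r)" using lift by blast
    have "\<not> inM r"
    proof
      assume "inM r" then have "inM ((y - r) + r)" using inM_add r(2) by blast
      then show False using assms by simp
    qed
    then have "r \<notin> mm" using mm_inM by blast
    then obtain u where u: "u \<in> R" "r * u = 1" using not_mm r(1) by blast
    have eq: "y * u = 1 - (- ((y - r) * u))" using u(2) by (simp add: algebra_simps)
    have "inM (- ((y - r) * u))" using inM_neg inM_mult r(2) by blast
    then have un: "is_unit_S (1 - (- ((y - r) * u)))" by (rule one_minus_M_unit)
    have "is_unit_S (y * u)" using un by (simp only: eq)
    then show ?thesis by (rule unit_of_mult)
  next
    case False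
    then have q2: "?q \<ge> 2" using q0 by linarith
    obtain e where e: "e \<ge> 1" "\<sigma> ^^ e = id" using sigma_period by blast
    define Q where "Q = ?q ^ e"
    have "?q ^ 1 \<le> ?q ^ e" using e(1) q2 by (intro power_increasing) auto
    then have Q2: "Q \<ge> 2" unfolding Q_def using q2 by simp
    then obtain Q' where Q': "Q = Suc (Suc Q')" by (metis add_2_eq_Suc le_Suc_ex)
    have yQ: "inM (y - y ^ Q)" using frob_iter[of e y] e(2) by (simp add: Q_def)
    define E where "E = y ^ Suc Q'"
    have yE: "y ^ Q = y * E" unfolding E_def Q' by simp
    have EE: "inM (E * E - E)"
    proof -
      have "E * E - E = y ^ Q' * (y ^ Q - y)"
      proof -
        have "y ^ Q' * y ^ Q = E * E" unfolding E_def Q'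
          by (simp add: power_add[symmetric])
        moreover have "y ^ Q' * y = E" unfolding E_def by (simp add: mult.commute)
        ultimately show ?thesis by (simp add: right_diff_distrib)
      qed
      moreover have "inM (y ^ Q - y)" using inM_neg[OF yQ] by simp
      ultimately show ?thesis using inM_mult2 by simp
    qed
    have Ek: "inM (E ^ Suc k - E)" for k
    proof (induction k)
      case 0 then show ?case using inM_0 by simp
    next
      case (Suc k)
      have eq: "E ^ Suc (Suc k) - E = E * (E ^ Suc k - E) + (E * E - E)" by (simp add: algebra_simps)
      have "inM (E * (E ^ Suc k - E) + (E * E - E))" using inM_add[OF inM_mult2[OF Suc.IH] EE] .
      then show ?case by (simp only: eq)
    qed
    have "inM (\<sigma> E - E)"
    proof -
      have eq: "\<sigma> E - E = (\<sigma> E - E ^ ?q) + (E ^ Suc (?q - 1) - E)" using q0 by simp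
      have "inM ((\<sigma> E - E ^ ?q) + (E ^ Suc (?q - 1) - E))" using inM_add[OF frob_M Ek] .
      then show ?thesis by (simp only: eq)
    qed
    then obtain r where r: "r \<in> R" "inM (E - r)" using lift by blast
    have rr: "inM (r * r - r)"
    proof -
      have eq: "r * r - r = (E * E - E) - ((E - r) * (E + r) - (E - r))" by (simp add: algebra_simps)
      have "inM ((E * E - E) - ((E - r) * (E + r) - (E - r)))"
        using inM_diff[OF EE inM_diff[OF inM_mult[OF r(2), of "E + r"] r(2)]] .
      then show ?thesis by (simp only: eq)
    qed
    have rrmm: "r * r - r \<in> mm" using inM_R[OF diff_R[OF mult_R[OF r(1) r(1)] r(1)] rr] .
    show ?thesis
    proof (cases "r \<in> mm")
      case True
      then have "inM E" using inM_add[OF r(2) mm_inM[OF True]] by simp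
      then have "inM (y ^ Q)" using yE inM_mult2 by simp
      then have "inM (y ^ Q + (y - y ^ Q))" using inM_add yQ by blast
      then show ?thesis using assms by simp
    next
      case False
      then obtain u where u: "u \<in> R" "r * u = 1" using not_mm r(1) by blast
      show ?thesis
      proof (cases "1 - r \<in> mm")
        case True
        have "inM (1 - E)" using inM_diff[OF mm_inM[OF True] r(2)] by simp
        then have "is_unit_S (1 - (1 - E))" by (rule one_minus_M_unit)
        then have "is_unit_S E" by simp
        then have "is_unit_S (y * (y ^ Q'))" unfolding E_def by (simp add: mult.commute)
        then show ?thesis by (rule unit_of_mult)
      next
        case False
        then obtain v where v: "v \<in> R" "(1 - r) * v = 1" using not_mm diff_R[OF one_R r(1)] by blast
        have "(r * r - r) * (- (u * v)) = (r * u) * ((1 - r) * v)" by (simp add: algebra_simps)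
        then have "(r * r - r) * (- (u * v)) = 1" using u v by simp
        moreover have "- (u * v) \<in> R" using neg_R mult_R u v by blast
        ultimately show ?thesis using rrmm by (auto simp: max_ideal_def)
      qed
    qed
  qed
qed

lemma S1: "\<exists>r\<in>R. \<exists>z. is_unit_S z \<and> y = r * z"
proof -
  have "\<forall>y. (\<exists>r\<in>R. \<exists>z. is_unit_S z \<and> y = r * z) \<or> (\<exists>w. y = pi ^ k * w)" for k
  proof (induction k)
    case 0 then show ?case by simp
  next
    case (Suc k)
    show ?case
    proof
      fix y
      show "(\<exists>r\<in>R. \<exists>z. is_unit_S z \<and> y = r * z) \<or> (\<exists>w. y = pi ^ Suc k * w)"
      proof (cases "\<exists>r\<in>R. \<exists>z. is_unit_S z \<and> y = r * z")
        case True then show ?thesis by blast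
      next
        case False
        then obtain w where w: "y = pi ^ k * w" using Suc.IH by blast
        show ?thesis
        proof (cases "inM w")
          case True
          then obtain w' where "w = pi * w'" unfolding inM_def by blast
          then have "y = pi ^ Suc k * w'" using w by (simp add: mult.assoc mult.commute mult.left_commute)
          then show ?thesis by blast
        next
          case False
          then have "is_unit_S w" by (rule unit_char)
          then show ?thesis using w pow_R[OF pi_R] by blast
        qed
      qed
    qed
  qed
  then have "(\<exists>r\<in>R. \<exists>z. is_unit_S z \<and> y = r * z) \<or> (\<exists>w. y = pi ^ tt * w)" by blast
  moreover have "is_unit_S (1::'a)" by (simp add: is_unit_S_def)
  ultimately show ?thesis
  proof (elim disjE)
    assume "\<exists>w. y = pi ^ tt * w" "is_unit_S (1::'a)"
    then have "y = 0 * 1" using tt(1) by auto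
    then show ?thesis using zero_R \<open>is_unit_S (1::'a)\<close> by blast
  qed auto
qed

lemma U:
  assumes "\<forall>r\<in>R. r * y = 0 \<longrightarrow> r = 0"
  shows "is_unit_S y"
proof (rule unit_char, rule notI)
  assume "inM y"
  then obtain z where z: "y = pi * z" unfolding inM_def by blast
  have "pi ^ (tt - 1) * y = (pi ^ (tt - 1) * pi) * z" by (simp add: z mult.assoc)
  also have "\<dots> = 0" by (simp only: pi_tt1 mult_zero_left)
  finally have "pi ^ (tt - 1) = 0" using assms pow_R[OF pi_R] by blast
  then show False using tt(3) by simp
qed

end


lemma is_unit_S_dvd: "is_unit_S x \<longleftrightarrow> x dvd 1"
  unfolding is_unit_S_def dvd_def by (metis mult.commute)

lemma unit_S_mult: "is_unit_S x \<Longrightarrow> is_unit_S y \<Longrightarrow> is_unit_S (x * y)"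
  unfolding is_unit_S_def
proof -
  assume "\<exists>b. x * b = 1" "\<exists>b. y * b = 1"
  then obtain a b where "x * a = 1" "y * b = 1" by blast
  then have "(x * y) * (a * b) = 1" by (metis mult.assoc mult.left_commute mult_1_right)
  then show "\<exists>b. x * y * b = 1" by blast
qed

lemma unit_S_neg: "is_unit_S x \<Longrightarrow> is_unit_S (- x)"
  unfolding is_unit_S_def by (metis minus_mult_minus)

lemma aux_ring:
  fixes d d' g g' sd sg a a' :: "'a::comm_ring_1"
  assumes "d * d' = 1" "g * g' = 1"
  shows "sd * sg * a' - sg * a * g' * (d * g) = sg * d * (sd * a' * d' - a)"
proof -
  have 1: "sg * d * (sd * a' * d' - a) = sd * sg * a' * (d * d') - sg * a * d" by (simp add: algebra_simps)
  have 2: "sg * a * g' * (d * g) = sg * a * d * (g * g')" by (simp add: algebra_simps)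
  show ?thesis unfolding 1 2 assms by simp
qed

lemma idx_mem: "(u, v) \<in> set (idx_pairs n i j) \<longleftrightarrow>
   (1 \<le> u \<and> u < i \<and> 1 \<le> v \<and> v \<le> n u) \<or> (u = i \<and> 1 \<le> v \<and> v \<le> j)"
  unfolding idx_pairs_def by (auto simp del: upt_Suc) (rule bexI[of _ u], auto)

lemma idx_len: "length (idx_pairs n i j) = (\<Sum>u=1..<i. n u) + j"
proof -
  have "length (concat (map (\<lambda>u. map (\<lambda>v. (u, v)) [1..<n u + 1]) [1..<i])) = sum_list (map n [1..<i])"
    by (simp add: length_concat comp_def del: upt_Suc)
  also have "\<dots> = sum n {1..<i}" using sum_set_upt_conv_sum_list_nat[of n 1 i] by simp
  finally show ?thesis unfolding idx_pairs_def by (simp del: upt_Suc)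
qed

lemma idx_snoc: "idx_pairs n i (Suc j) = idx_pairs n i j @ [(i, Suc j)]"
  unfolding idx_pairs_def by simp

lemma idx_next: "1 \<le> i \<Longrightarrow> idx_pairs n (Suc i) 0 = idx_pairs n i (n i)"
  unfolding idx_pairs_def by simp

lemma idx_base: "idx_pairs n 1 0 = []"
  unfolding idx_pairs_def by simp

context gs
begin

definition CL :: "('b \<Rightarrow> 'a) \<Rightarrow> ('b \<Rightarrow> 'b \<Rightarrow> 'a) \<Rightarrow> ('b \<times> 'b) list \<Rightarrow> 'a list" where
  "CL a \<gamma> ps = rev (map (\<lambda>(u, v). sconj \<sigma> (\<gamma> u v) (a u)) ps)"

lemma G_CL: "G_poly \<sigma> a \<gamma> n i j = Pr \<sigma> (CL a \<gamma> (idx_pairs n i j))"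
proof -
  have "(\<lambda>c. [:- c, 1:]) \<circ> (\<lambda>(u, v). sconj \<sigma> (\<gamma> u v) (a u)) = (\<lambda>(u, v). [:- sconj \<sigma> (\<gamma> u v) (a u), 1:])"
    by (auto simp: fun_eq_iff)
  then show ?thesis unfolding G_poly_def Pr_def CL_def by (simp add: rev_map)
qed

lemma CL_local: "(\<And>u v. (u, v) \<in> set ps \<Longrightarrow> \<gamma> u v = \<gamma>' u v) \<Longrightarrow> CL a \<gamma> ps = CL a \<gamma>' ps"
  unfolding CL_def by (auto intro!: map_cong)

lemma sigma_R: "r \<in> R \<Longrightarrow> \<sigma> r = r" using fixR by blast

lemma Dsum:
  assumes "\<forall>v. c v \<in> R"
  shows "\<sigma> (\<Sum>v\<in>V. c v * y v) * a - cc * (\<Sum>v\<in>V. c v * y v) = (\<Sum>v\<in>V. c v * (\<sigma> (y v) * a - cc * y v))"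
proof -
  have "\<sigma> (\<Sum>v\<in>V. c v * y v) = (\<Sum>v\<in>V. c v * \<sigma> (y v))"
    by (simp add: ra_sum[OF aut] ra_mult[OF aut] sigma_R assms)
  then show ?thesis by (simp add: sum_distrib_left sum_distrib_right sum_subtractf algebra_simps)
qed

lemma Lam_lin:
  assumes "\<forall>v. c v \<in> R"
  shows "Lam \<sigma> a cs (\<Sum>v\<in>V. c v * y v) = (\<Sum>v\<in>V. c v * Lam \<sigma> a cs (y v))"
proof (induction cs)
  case Nil then show ?case by simp
next
  case (Cons cc cs)
  then show ?case using Dsum[OF assms, where y = "\<lambda>v. Lam \<sigma> a cs (y v)" and a = a and cc = cc and V = V] by simp
qed

lemma D_smult: "r \<in> R \<Longrightarrow> \<sigma> (r * z) * a - cc * (r * z) = r * (\<sigma> z * a - cc * z)"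
  by (simp add: ra_mult[OF aut] sigma_R algebra_simps)

lemma sigma_unit: "is_unit_S x \<Longrightarrow> is_unit_S (\<sigma> x)"
  unfolding is_unit_S_def by (metis ra_mult[OF aut] ra_one[OF aut])

lemma ker_same:
  assumes g: "is_unit_S g" and a: "is_unit_S a" and y: "\<sigma> y * a - sconj \<sigma> g a * y = 0"
  shows "\<exists>r\<in>R. y = r * g"
proof -
  let ?g' = "unit_inv g" and ?a' = "unit_inv a"
  have gg: "g * ?g' = 1" using unit_inv[OF g] .
  have aa: "a * ?a' = 1" using unit_inv[OF a] .
  have eq: "\<sigma> y * a = \<sigma> g * a * ?g' * y" using y by (simp add: sconj_def)
  have "\<sigma> y = \<sigma> y * (a * ?a')" using aa by simp
  also have "\<dots> = (\<sigma> y * a) * ?a'" by (simp add: mult.assoc)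
  also have "\<dots> = (\<sigma> g * a * ?g' * y) * ?a'" using eq by simp
  also have "\<dots> = \<sigma> g * ?g' * y * (a * ?a')" by (simp add: algebra_simps)
  also have "\<dots> = \<sigma> g * ?g' * y" using aa by simp
  finally have e1: "\<sigma> y = \<sigma> g * ?g' * y" .
  have sg: "\<sigma> g * \<sigma> ?g' = 1" using gg by (metis ra_mult[OF aut] ra_one[OF aut])
  have "\<sigma> (y * ?g') = \<sigma> y * \<sigma> ?g'" by (rule ra_mult[OF aut])
  also have "\<dots> = (\<sigma> g * \<sigma> ?g') * (?g' * y)" by (simp add: e1 algebra_simps)
  also have "\<dots> = y * ?g'" by (simp add: sg mult.commute)
  finally have "y * ?g' \<in> R" using fixR by blast
  moreover have "y = (y * ?g') * g" using gg by (metis mult.assoc mult.commute mult_1_right)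
  ultimately show ?thesis by blast
qed

lemma ker_other:
  assumes g: "is_unit_S g"
    and cond: "\<And>b. is_unit_S b \<Longrightarrow> is_unit_S (a - sconj \<sigma> b a')"
    and y: "\<sigma> y * a' - sconj \<sigma> g a * y = 0"
  shows "y = 0"
proof -
  obtain r z where rz: "r \<in> R" "is_unit_S z" "y = r * z" using S1[of y] by blast
  let ?g' = "unit_inv g"
  let ?d = "z * ?g'"
  have gg: "g * ?g' = 1" using unit_inv[OF g] .
  have ug': "is_unit_S ?g'" unfolding is_unit_S_def using gg by (metis mult.commute)
  have ud: "is_unit_S ?d" using rz(2) ug' by (rule unit_S_mult)
  let ?d' = "unit_inv ?d"
  have dd: "?d * ?d' = 1" using unit_inv[OF ud] .
  have zdg: "z = ?d * g" using gg by (metis mult.assoc mult.commute mult_1_right)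
  have "\<sigma> z * a' - sconj \<sigma> g a * z = \<sigma> g * ?d * (\<sigma> ?d * a' * ?d' - a)"
  proof -
    have "\<sigma> z = \<sigma> ?d * \<sigma> g" by (subst zdg) (rule ra_mult[OF aut])
    then have "\<sigma> z * a' - sconj \<sigma> g a * z = \<sigma> ?d * \<sigma> g * a' - \<sigma> g * a * ?g' * (?d * g)"
      by (simp add: sconj_def zdg[symmetric])
    also have "\<dots> = \<sigma> g * ?d * (\<sigma> ?d * a' * ?d' - a)" by (rule aux_ring[OF dd gg])
    finally show ?thesis .
  qed
  also have "\<dots> = - (\<sigma> g * ?d * (a - sconj \<sigma> ?d a'))" by (simp add: sconj_def algebra_simps)
  finally have eq: "\<sigma> z * a' - sconj \<sigma> g a * z = - (\<sigma> g * ?d * (a - sconj \<sigma> ?d a'))" .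
  have un: "is_unit_S (\<sigma> z * a' - sconj \<sigma> g a * z)"
    unfolding eq by (intro unit_S_neg unit_S_mult sigma_unit[OF g] ud cond[OF ud])
  have "r * (\<sigma> z * a' - sconj \<sigma> g a * z) = 0" using y rz(3) D_smult[OF rz(1)] by simp
  then have "r = 0" using un unfolding is_unit_S_def by (metis mult.assoc mult_1_right mult_zero_left)
  then show ?thesis using rz by simp
qed

end


locale ctx = gs +
  fixes l :: nat and n :: "nat \<Rightarrow> nat" and a :: "nat \<Rightarrow> 'a" and \<beta> :: "nat \<Rightarrow> nat \<Rightarrow> 'a"
  assumes a_units: "\<forall>i\<in>{1..l}. is_unit_S (a i)"
    and cond_i: "\<forall>b. is_unit_S b \<longrightarrow>
                   (\<forall>i j. 1 \<le> i \<and> i < j \<and> j \<le> l \<longrightarrow> is_unit_S (a i - sconj \<sigma> b (a j)))"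
    and cond_ii: "\<forall>i\<in>{1..l}. \<forall>c. (\<forall>v. c v \<in> R) \<and> (\<Sum>v=1..n i. c v * \<beta> i v) = 0
                     \<longrightarrow> (\<forall>v\<in>{1..n i}. c v = 0)"
begin

definition indep where
  "indep u cs V \<longleftrightarrow> (\<forall>c. (\<forall>v. c v \<in> R) \<and> (\<Sum>v\<in>V. c v * Lam \<sigma> (a u) cs (\<beta> u v)) = 0 \<longrightarrow> (\<forall>v\<in>V. c v = 0))"

definition Zc where
  "Zc cs i j \<longleftrightarrow> (\<forall>u\<in>{1..l}. \<forall>v\<in>{1..n u}. (u < i \<or> u = i \<and> v \<le> j) \<longrightarrow> Lam \<sigma> (a u) cs (\<beta> u v) = 0)
     \<and> indep i cs {Suc j..n i} \<and> (\<forall>u\<in>{Suc i..l}. indep u cs {1..n u})"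

definition Z where "Z \<gamma> i j \<longleftrightarrow> Zc (CL a \<gamma> (idx_pairs n i j)) i j"

definition Claim where
  "Claim i j \<longleftrightarrow> (\<exists>\<gamma>. (\<forall>u v. (u, v) \<in> set (idx_pairs n i j) \<longrightarrow> is_unit_S (\<gamma> u v)) \<and> \<gamma> 1 1 = \<beta> 1 1 \<and>
     (\<forall>i'\<in>{1..i}. \<forall>j'\<in>{1..n i'}. (i' < i \<or> j' \<le> j) \<longrightarrow> Z \<gamma> i' j') \<and> Z \<gamma> i j)"

lemma indep_unit:
  assumes "indep u cs V" "v \<in> V" "finite V"
  shows "is_unit_S (Lam \<sigma> (a u) cs (\<beta> u v))"
proof (rule U, intro ballI impI)
  fix r assume r: "r \<in> R" "r * Lam \<sigma> (a u) cs (\<beta> u v) = 0"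
  let ?c = "\<lambda>w. if w = v then r else 0"
  have cR: "\<forall>w. ?c w \<in> R" using r zero_R by simp
  have "(\<Sum>w\<in>V. ?c w * Lam \<sigma> (a u) cs (\<beta> u w)) = (\<Sum>w\<in>V. if w = v then r * Lam \<sigma> (a u) cs (\<beta> u w) else 0)"
    by (rule sum.cong) auto
  also have "\<dots> = 0" using assms(2,3) r(2) by simp
  finally have s0: "(\<Sum>w\<in>V. ?c w * Lam \<sigma> (a u) cs (\<beta> u w)) = 0" .
  have "?c v = 0" using assms(1)[unfolded indep_def, rule_format, of ?c, OF conjI[OF cR s0] assms(2)] .
  then show "r = 0" by simp
qed

lemma indep0: "u \<in> {1..l} \<Longrightarrow> indep u [] {1..n u}"
  using cond_ii unfolding indep_def by simp

lemma beta_unit: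
  assumes "u \<in> {1..l}" "v \<in> {1..n u}"
  shows "is_unit_S (\<beta> u v)"
proof -
  have "indep u [] {1..n u}" using cond_ii assms(1) unfolding indep_def by simp
  from indep_unit[OF this assms(2)] show ?thesis by simp
qed

lemma claim_base: "1 \<le> l \<Longrightarrow> Claim 1 0"
  unfolding Claim_def
proof (intro exI[of _ \<beta>] conjI)
  assume l: "1 \<le> l"
  show "\<forall>u v. (u, v) \<in> set (idx_pairs n 1 0) \<longrightarrow> is_unit_S (\<beta> u v)" unfolding idx_base by simp
  show "\<beta> 1 1 = \<beta> 1 1" ..
  show "\<forall>i'\<in>{1..1}. \<forall>j'\<in>{1..n i'}. (i' < 1 \<or> j' \<le> 0) \<longrightarrow> Z \<beta> i' j'" by auto
  have cs: "CL a \<beta> (idx_pairs n 1 0) = []" unfolding idx_base by (simp add: CL_def)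
  show "Z \<beta> 1 0"
    unfolding Z_def cs Zc_def
  proof (intro conjI ballI impI)
    fix u v assume "u \<in> {1..l}" "v \<in> {1..n u}" "u < 1 \<or> u = 1 \<and> v \<le> 0"
    then show "Lam \<sigma> (a u) [] (\<beta> u v) = 0" by auto
  next
    have "1 \<in> {1..l}" using l by simp
    from indep0[OF this] show "indep 1 [] {Suc 0..n 1}" by simp
  next
    fix u assume "u \<in> {Suc 1..l}"
    then show "indep u [] {1..n u}" using indep0 by simp
  qed
qed


lemma Z_local:
  assumes "\<And>u v. (u, v) \<in> set (idx_pairs n i j) \<Longrightarrow> \<gamma> u v = \<gamma>' u v"
  shows "Z \<gamma>' i j = Z \<gamma> i j"
  unfolding Z_def using CL_local[of "idx_pairs n i j" \<gamma> \<gamma>' a] assms by simp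

lemma T1:
  assumes i: "1 \<le> i" "i \<le> l" and j: "j < n i" and C: "Claim i j"
  shows "Claim i (Suc j)"
proof -
  obtain \<gamma> where units: "\<forall>u v. (u, v) \<in> set (idx_pairs n i j) \<longrightarrow> is_unit_S (\<gamma> u v)"
    and g11: "\<gamma> 1 1 = \<beta> 1 1"
    and prev: "\<forall>i'\<in>{1..i}. \<forall>j'\<in>{1..n i'}. (i' < i \<or> j' \<le> j) \<longrightarrow> Z \<gamma> i' j'"
    and Zij: "Z \<gamma> i j"
    using C unfolding Claim_def by blast
  define cs where "cs = CL a \<gamma> (idx_pairs n i j)"
  have Z0: "\<forall>u\<in>{1..l}. \<forall>v\<in>{1..n u}. (u < i \<or> u = i \<and> v \<le> j) \<longrightarrow> Lam \<sigma> (a u) cs (\<beta> u v) = 0"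
    and Zi: "indep i cs {Suc j..n i}" and Zu: "\<forall>u\<in>{Suc i..l}. indep u cs {1..n u}"
    using Zij unfolding Z_def Zc_def cs_def by auto
  define g where "g = Lam \<sigma> (a i) cs (\<beta> i (Suc j))"
  have gu: "is_unit_S g" unfolding g_def using indep_unit[OF Zi] j by simp
  have ai: "is_unit_S (a i)" using a_units i by simp
  define \<gamma>' where "\<gamma>' = (\<lambda>u v. if u = i \<and> v = Suc j then g else \<gamma> u v)"
  have loc: "\<gamma> u v = \<gamma>' u v" if "(u, v) \<in> set (idx_pairs n i' j')" "i' < i \<or> (i' = i \<and> j' \<le> j)" for u v i' j'
    using that unfolding \<gamma>'_def idx_mem by auto
  have csS: "CL a \<gamma>' (idx_pairs n i j) = cs"
    unfolding cs_def by (rule CL_local[symmetric]) (rule loc, auto)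
  define c where "c = sconj \<sigma> g (a i)"
  have cs': "CL a \<gamma>' (idx_pairs n i (Suc j)) = c # cs"
    using csS unfolding idx_snoc CL_def c_def \<gamma>'_def by simp
  have gg: "g * unit_inv g = 1" using unit_inv[OF gu] .
  have Znew: "Z \<gamma>' i (Suc j)"
    unfolding Z_def cs' Zc_def
  proof (intro conjI ballI impI)
    fix u v assume uv: "u \<in> {1..l}" "v \<in> {1..n u}" "u < i \<or> u = i \<and> v \<le> Suc j"
    show "Lam \<sigma> (a u) (c # cs) (\<beta> u v) = 0"
    proof (cases "u = i \<and> v = Suc j")
      case True
      then have "Lam \<sigma> (a u) (c # cs) (\<beta> u v) = \<sigma> g * a i - \<sigma> g * a i * (unit_inv g * g)"
        by (simp add: g_def c_def sconj_def algebra_simps)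
      also have "\<dots> = 0" using gg by (simp add: mult.commute)
      finally show ?thesis .
    next
      case False
      then have "Lam \<sigma> (a u) cs (\<beta> u v) = 0" using Z0 uv by auto
      then show ?thesis by (simp add: ra_zero[OF aut])
    qed
  next
    show "indep i (c # cs) {Suc (Suc j)..n i}"
      unfolding indep_def
    proof (intro allI impI ballI)
      fix cf v assume H: "(\<forall>v. cf v \<in> R) \<and> (\<Sum>v\<in>{Suc (Suc j)..n i}. cf v * Lam \<sigma> (a i) (c # cs) (\<beta> i v)) = 0"
        and v: "v \<in> {Suc (Suc j)..n i}"
      let ?V = "{Suc (Suc j)..n i}"
      let ?y = "\<lambda>v. Lam \<sigma> (a i) cs (\<beta> i v)"
      define Y where "Y = (\<Sum>v\<in>?V. cf v * ?y v)"
      have cfR: "\<forall>v. cf v \<in> R" using H by blast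
      have "\<sigma> Y * a i - c * Y = (\<Sum>v\<in>?V. cf v * Lam \<sigma> (a i) (c # cs) (\<beta> i v))"
        unfolding Y_def using Dsum[OF cfR, where y = ?y and a = "a i" and cc = c and V = ?V] by simp
      also have "\<dots> = 0" using H by blast
      finally have "\<sigma> Y * a i - sconj \<sigma> g (a i) * Y = 0" unfolding c_def .
      then obtain r where r: "r \<in> R" "Y = r * g" using ker_same[OF gu ai] by blast
      define cf' where "cf' = (\<lambda>w. if w = Suc j then - r else cf w)"
      have cf'R: "\<forall>w. cf' w \<in> R" unfolding cf'_def using cfR neg_R[OF r(1)] by simp
      have ins: "{Suc j..n i} = insert (Suc j) ?V" using j by auto
      have "(\<Sum>w\<in>{Suc j..n i}. cf' w * ?y w) = cf' (Suc j) * ?y (Suc j) + (\<Sum>w\<in>?V. cf' w * ?y w)"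
        unfolding ins by (rule sum.insert) auto
      also have "(\<Sum>w\<in>?V. cf' w * ?y w) = Y" unfolding Y_def cf'_def by (rule sum.cong) auto
      also have "cf' (Suc j) * ?y (Suc j) = - (r * g)" unfolding cf'_def g_def by simp
      finally have "(\<Sum>w\<in>{Suc j..n i}. cf' w * ?y w) = 0" using r(2) by simp
      then have "\<forall>w\<in>{Suc j..n i}. cf' w = 0" using Zi cf'R unfolding indep_def by blast
      moreover have "v \<in> {Suc j..n i}" "v \<noteq> Suc j" using v by auto
      ultimately have "cf' v = 0" by blast
      then show "cf v = 0" using \<open>v \<noteq> Suc j\<close> unfolding cf'_def by simp
    qed
  next
    fix u assume u: "u \<in> {Suc i..l}"
    show "indep u (c # cs) {1..n u}"
      unfolding indep_def
    proof (intro allI impI ballI)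
      fix cf v assume H: "(\<forall>v. cf v \<in> R) \<and> (\<Sum>v\<in>{1..n u}. cf v * Lam \<sigma> (a u) (c # cs) (\<beta> u v)) = 0"
        and v: "v \<in> {1..n u}"
      let ?V = "{1..n u}"
      let ?y = "\<lambda>v. Lam \<sigma> (a u) cs (\<beta> u v)"
      define Y where "Y = (\<Sum>v\<in>?V. cf v * ?y v)"
      have cfR: "\<forall>v. cf v \<in> R" using H by blast
      have "\<sigma> Y * a u - c * Y = (\<Sum>v\<in>?V. cf v * Lam \<sigma> (a u) (c # cs) (\<beta> u v))"
        unfolding Y_def using Dsum[OF cfR, where y = ?y and a = "a u" and cc = c and V = ?V] by simp
      also have "\<dots> = 0" using H by blast
      finally have Y0: "\<sigma> Y * a u - sconj \<sigma> g (a i) * Y = 0" unfolding c_def .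
      have cond: "is_unit_S (a i - sconj \<sigma> b (a u))" if "is_unit_S b" for b
        using cond_i that i u by auto
      have "Y = 0" by (rule ker_other[OF gu cond Y0])
      then have "\<forall>w\<in>?V. cf w = 0" using Zu u cfR unfolding indep_def Y_def by blast
      then show "cf v = 0" using v by blast
    qed
  qed
  show ?thesis
    unfolding Claim_def
  proof (intro exI[of _ \<gamma>'] conjI)
    show "\<forall>u v. (u, v) \<in> set (idx_pairs n i (Suc j)) \<longrightarrow> is_unit_S (\<gamma>' u v)"
      using units gu unfolding idx_snoc \<gamma>'_def by auto
    show "\<gamma>' 1 1 = \<beta> 1 1"
    proof (cases "i = 1 \<and> Suc j = 1")
      case True
      then have "cs = []" unfolding cs_def CL_def using idx_base by simp
      then show ?thesis using True unfolding \<gamma>'_def g_def by simp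
    next
      case False then show ?thesis unfolding \<gamma>'_def using g11 by auto
    qed
    show "\<forall>i'\<in>{1..i}. \<forall>j'\<in>{1..n i'}. (i' < i \<or> j' \<le> Suc j) \<longrightarrow> Z \<gamma>' i' j'"
    proof (intro ballI impI)
      fix i' j' assume i': "i' \<in> {1..i}" "j' \<in> {1..n i'}" "i' < i \<or> j' \<le> Suc j"
      show "Z \<gamma>' i' j'"
      proof (cases "i' = i \<and> j' = Suc j")
        case True then show ?thesis using Znew by simp
      next
        case False
        then have o: "i' < i \<or> (i' = i \<and> j' \<le> j)" using i' by auto
        have "Z \<gamma>' i' j' = Z \<gamma> i' j'" by (rule Z_local) (rule loc[OF _ o], assumption)
        moreover have "Z \<gamma> i' j'" using prev i' o by auto
        ultimately show ?thesis by simp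
      qed
    qed
    show "Z \<gamma>' i (Suc j)" by (rule Znew)
  qed
qed


lemma T2:
  assumes i: "1 \<le> i" "Suc i \<le> l" and C: "Claim i (n i)"
  shows "Claim (Suc i) 0"
proof -
  obtain \<gamma> where units: "\<forall>u v. (u, v) \<in> set (idx_pairs n i (n i)) \<longrightarrow> is_unit_S (\<gamma> u v)"
    and g11: "\<gamma> 1 1 = \<beta> 1 1"
    and prev: "\<forall>i'\<in>{1..i}. \<forall>j'\<in>{1..n i'}. (i' < i \<or> j' \<le> n i) \<longrightarrow> Z \<gamma> i' j'"
    and Zij: "Z \<gamma> i (n i)"
    using C unfolding Claim_def by blast
  have eq: "idx_pairs n (Suc i) 0 = idx_pairs n i (n i)" by (rule idx_next[OF i(1)])
  define cs where "cs = CL a \<gamma> (idx_pairs n i (n i))"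
  have Z0: "\<forall>u\<in>{1..l}. \<forall>v\<in>{1..n u}. (u < i \<or> u = i \<and> v \<le> n i) \<longrightarrow> Lam \<sigma> (a u) cs (\<beta> u v) = 0"
    and Zu: "\<forall>u\<in>{Suc i..l}. indep u cs {1..n u}"
    using Zij unfolding Z_def Zc_def cs_def by auto
  have Znew: "Z \<gamma> (Suc i) 0"
    unfolding Z_def eq Zc_def cs_def[symmetric]
  proof (intro conjI ballI impI)
    fix u v assume uv: "u \<in> {1..l}" "v \<in> {1..n u}" "u < Suc i \<or> u = Suc i \<and> v \<le> 0"
    have "u < i \<or> u = i" using uv(2,3) by auto
    then have "u < i \<or> u = i \<and> v \<le> n i" using uv(2) by auto
    then show "Lam \<sigma> (a u) cs (\<beta> u v) = 0" using Z0 uv(1,2) by blast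
  next
    show "indep (Suc i) cs {Suc 0..n (Suc i)}" using Zu i by simp
  next
    fix u assume "u \<in> {Suc (Suc i)..l}"
    then show "indep u cs {1..n u}" using Zu by simp
  qed
  show ?thesis
    unfolding Claim_def
  proof (intro exI[of _ \<gamma>] conjI)
    show "\<forall>u v. (u, v) \<in> set (idx_pairs n (Suc i) 0) \<longrightarrow> is_unit_S (\<gamma> u v)" using units eq by simp
    show "\<gamma> 1 1 = \<beta> 1 1" by (rule g11)
    show "\<forall>i'\<in>{1..Suc i}. \<forall>j'\<in>{1..n i'}. (i' < Suc i \<or> j' \<le> 0) \<longrightarrow> Z \<gamma> i' j'"
    proof (intro ballI impI)
      fix i' j' assume i': "i' \<in> {1..Suc i}" "j' \<in> {1..n i'}" "i' < Suc i \<or> j' \<le> 0"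
      then have i'i: "i' \<in> {1..i}" by auto
      have "i' < i \<or> j' \<le> n i"
      proof (cases "i' = i")
        case True then show ?thesis using i'(2) by simp
      next
        case False then show ?thesis using i' by auto
      qed
      then show "Z \<gamma> i' j'" using prev i'(2) i'i by blast
    qed
    show "Z \<gamma> (Suc i) 0" by (rule Znew)
  qed
qed

lemma inner: "Claim i 0 \<Longrightarrow> 1 \<le> i \<Longrightarrow> i \<le> l \<Longrightarrow> j \<le> n i \<Longrightarrow> Claim i j"
proof (induction j)
  case 0 then show ?case by simp
next
  case (Suc j) then show ?case using T1 by simp
qed

lemma all_claims: "1 \<le> i \<Longrightarrow> i \<le> l \<Longrightarrow> j \<le> n i \<Longrightarrow> Claim i j"
proof (induction i arbitrary: j rule: nat_induct_at_least)
  case base then show ?case using inner claim_base by simp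
next
  case (Suc i)
  have "Claim i (n i)" using Suc by simp
  then have "Claim (Suc i) 0" using T2 Suc by simp
  then show ?case using inner Suc by simp
qed

lemma concl:
  assumes Zg: "Z \<gamma> i j" and i: "i \<in> {1..l}" and j: "j \<in> {1..n i}"
  shows "degree (G_poly \<sigma> a \<gamma> n i j) = (\<Sum>u=1..<i. n u) + j \<and>
         (\<forall>u\<in>{1..l}. \<forall>v\<in>{1..n u}.
            ((u < i \<or> (u = i \<and> v \<le> j)) \<longrightarrow>
               skew_eval \<sigma> (G_poly \<sigma> a \<gamma> n i j) (sconj \<sigma> (\<beta> u v) (a u)) = 0) \<and>
            ((i < u \<or> (u = i \<and> j < v)) \<longrightarrow>
               is_unit_S (skew_eval \<sigma> (G_poly \<sigma> a \<gamma> n i j) (sconj \<sigma> (\<beta> u v) (a u)))))"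
proof -
  define cs where "cs = CL a \<gamma> (idx_pairs n i j)"
  have Z0: "\<forall>u\<in>{1..l}. \<forall>v\<in>{1..n u}. (u < i \<or> u = i \<and> v \<le> j) \<longrightarrow> Lam \<sigma> (a u) cs (\<beta> u v) = 0"
    and Zi: "indep i cs {Suc j..n i}" and Zu: "\<forall>u\<in>{Suc i..l}. indep u cs {1..n u}"
    using Zg unfolding Z_def Zc_def cs_def by auto
  have G: "G_poly \<sigma> a \<gamma> n i j = Pr \<sigma> cs" unfolding cs_def by (rule G_CL)
  have deg: "degree (G_poly \<sigma> a \<gamma> n i j) = (\<Sum>u=1..<i. n u) + j"
    unfolding G using Pr_deg[OF aut nz, of cs] by (simp add: cs_def CL_def idx_len)
  have ev: "skew_eval \<sigma> (G_poly \<sigma> a \<gamma> n i j) (sconj \<sigma> (\<beta> u v) (a u)) * \<beta> u v = Lam \<sigma> (a u) cs (\<beta> u v)"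
    if "u \<in> {1..l}" "v \<in> {1..n u}" for u v
    unfolding G skew_eval_Pr[OF aut] using evr_Lam[OF aut beta_unit[OF that]] .
  show ?thesis
  proof (intro conjI deg ballI impI)
    fix u v assume uv: "u \<in> {1..l}" "v \<in> {1..n u}" "u < i \<or> u = i \<and> v \<le> j"
    let ?e = "skew_eval \<sigma> (G_poly \<sigma> a \<gamma> n i j) (sconj \<sigma> (\<beta> u v) (a u))"
    have "Lam \<sigma> (a u) cs (\<beta> u v) = 0" using Z0 uv by blast
    then have "?e * \<beta> u v = 0" using ev[OF uv(1,2)] by simp
    then have "?e * \<beta> u v * unit_inv (\<beta> u v) = 0" by simp
    then show "?e = 0" using unit_inv[OF beta_unit[OF uv(1,2)]] by (simp add: mult.assoc)
  next
    fix u v assume uv: "u \<in> {1..l}" "v \<in> {1..n u}" "i < u \<or> u = i \<and> j < v"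
    let ?e = "skew_eval \<sigma> (G_poly \<sigma> a \<gamma> n i j) (sconj \<sigma> (\<beta> u v) (a u))"
    have "is_unit_S (Lam \<sigma> (a u) cs (\<beta> u v))"
      using uv(3)
    proof
      assume "i < u"
      then have "indep u cs {1..n u}" using Zu uv(1) by simp
      then show ?thesis using indep_unit uv(2) by simp
    next
      assume "u = i \<and> j < v"
      then show ?thesis using indep_unit[OF Zi] uv(2) by auto
    qed
    then have "is_unit_S (?e * \<beta> u v)" using ev[OF uv(1,2)] by simp
    then show "is_unit_S ?e" by (rule unit_of_mult)
  qed
qed

lemma main:
  "\<exists>\<gamma>. (\<forall>i\<in>{1..l}. \<forall>j\<in>{1..n i}. is_unit_S (\<gamma> i j)) \<and> \<gamma> 1 1 = \<beta> 1 1 \<and>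
           (\<forall>i\<in>{1..l}. \<forall>j\<in>{1..n i}.
              degree (G_poly \<sigma> a \<gamma> n i j) = (\<Sum>u=1..<i. n u) + j \<and>
              (\<forall>u\<in>{1..l}. \<forall>v\<in>{1..n u}.
                 ((u < i \<or> (u = i \<and> v \<le> j)) \<longrightarrow>
                    skew_eval \<sigma> (G_poly \<sigma> a \<gamma> n i j) (sconj \<sigma> (\<beta> u v) (a u)) = 0) \<and>
                 ((i < u \<or> (u = i \<and> j < v)) \<longrightarrow>
                    is_unit_S (skew_eval \<sigma> (G_poly \<sigma> a \<gamma> n i j) (sconj \<sigma> (\<beta> u v) (a u))))))"
proof (cases "l = 0")
  case True then show ?thesis by (intro exI[of _ \<beta>]) simp
next
  case False
  then have "Claim l (n l)" using all_claims by simp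
  then obtain \<gamma> where units: "\<forall>u v. (u, v) \<in> set (idx_pairs n l (n l)) \<longrightarrow> is_unit_S (\<gamma> u v)"
    and g11: "\<gamma> 1 1 = \<beta> 1 1"
    and prev: "\<forall>i'\<in>{1..l}. \<forall>j'\<in>{1..n i'}. (i' < l \<or> j' \<le> n l) \<longrightarrow> Z \<gamma> i' j'"
    unfolding Claim_def by blast
  have U': "\<forall>i\<in>{1..l}. \<forall>j\<in>{1..n i}. is_unit_S (\<gamma> i j)"
  proof (intro ballI)
    fix i j assume "i \<in> {1..l}" "j \<in> {1..n i}"
    then have "(i, j) \<in> set (idx_pairs n l (n l))" unfolding idx_mem by (cases "i < l") auto
    then show "is_unit_S (\<gamma> i j)" using units by blast
  qed
  have Cc: "\<forall>i\<in>{1..l}. \<forall>j\<in>{1..n i}.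
              degree (G_poly \<sigma> a \<gamma> n i j) = (\<Sum>u=1..<i. n u) + j \<and>
              (\<forall>u\<in>{1..l}. \<forall>v\<in>{1..n u}.
                 ((u < i \<or> (u = i \<and> v \<le> j)) \<longrightarrow>
                    skew_eval \<sigma> (G_poly \<sigma> a \<gamma> n i j) (sconj \<sigma> (\<beta> u v) (a u)) = 0) \<and>
                 ((i < u \<or> (u = i \<and> j < v)) \<longrightarrow>
                    is_unit_S (skew_eval \<sigma> (G_poly \<sigma> a \<gamma> n i j) (sconj \<sigma> (\<beta> u v) (a u)))))"
  proof (intro ballI)
    fix i j assume ij: "i \<in> {1..l}" "j \<in> {1..n i}"
    have o: "i < l \<or> j \<le> n l" using ij by (cases "i < l") auto
    have "Z \<gamma> i j" using prev ij o by blast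
    from concl[OF this ij] show "degree (G_poly \<sigma> a \<gamma> n i j) = (\<Sum>u=1..<i. n u) + j \<and>
              (\<forall>u\<in>{1..l}. \<forall>v\<in>{1..n u}.
                 ((u < i \<or> (u = i \<and> v \<le> j)) \<longrightarrow>
                    skew_eval \<sigma> (G_poly \<sigma> a \<gamma> n i j) (sconj \<sigma> (\<beta> u v) (a u)) = 0) \<and>
                 ((i < u \<or> (u = i \<and> j < v)) \<longrightarrow>
                    is_unit_S (skew_eval \<sigma> (G_poly \<sigma> a \<gamma> n i j) (sconj \<sigma> (\<beta> u v) (a u)))))" .
  qed
  show ?thesis using U' g11 Cc by blast
qed

end

theorem theorem2:
  fixes R :: "'a::comm_ring_1 set" and h :: "'a poly" and \<theta> :: 'a and \<sigma> :: "'a \<Rightarrow> 'a"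
    and l :: nat and n :: "nat \<Rightarrow> nat" and a :: "nat \<Rightarrow> 'a" and \<beta> :: "nat \<Rightarrow> nat \<Rightarrow> 'a"
  assumes setting: "galois_setting R h \<theta> \<sigma>"
    and a_units: "\<forall>i\<in>{1..l}. is_unit_S (a i)"
    and cond_i: "\<forall>b. is_unit_S b \<longrightarrow>
                   (\<forall>i j. 1 \<le> i \<and> i < j \<and> j \<le> l \<longrightarrow> is_unit_S (a i - sconj \<sigma> b (a j)))"
    and cond_ii: "\<forall>i\<in>{1..l}. \<forall>c. (\<forall>v. c v \<in> R) \<and> (\<Sum>v=1..n i. c v * \<beta> i v) = 0
                     \<longrightarrow> (\<forall>v\<in>{1..n i}. c v = 0)"
  shows "\<exists>\<gamma>. (\<forall>i\<in>{1..l}. \<forall>j\<in>{1..n i}. is_unit_S (\<gamma> i j)) \<and> \<gamma> 1 1 = \<beta> 1 1 \<and>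
           (\<forall>i\<in>{1..l}. \<forall>j\<in>{1..n i}.
              degree (G_poly \<sigma> a \<gamma> n i j) = (\<Sum>u=1..<i. n u) + j \<and>
              (\<forall>u\<in>{1..l}. \<forall>v\<in>{1..n u}.
                 ((u < i \<or> (u = i \<and> v \<le> j)) \<longrightarrow>
                    skew_eval \<sigma> (G_poly \<sigma> a \<gamma> n i j) (sconj \<sigma> (\<beta> u v) (a u)) = 0) \<and>
                 ((i < u \<or> (u = i \<and> j < v)) \<longrightarrow>
                    is_unit_S (skew_eval \<sigma> (G_poly \<sigma> a \<gamma> n i j) (sconj \<sigma> (\<beta> u v) (a u))))))"
proof -
  have "ctx R h \<theta> \<sigma> l n a \<beta>"
    unfolding ctx_def ctx_axioms_def gs_def using setting a_units cond_i cond_ii by simp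
  from ctx.main[OF this] show ?thesis .
qed

end
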